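(* Let $E$ be a graph and $k$ a field. If any two irreducible representations of $L_k(E)$ are algebraically equivalent, then $E$ has no cycles.
   Context: A graph $E=(E^0,E^1,r,s)$ has vertex set $E^0$, edge set $E^1$, range and source maps; no countability assumed. A vertex is regular if it emits a finite nonzero number of edges. A cycle is a path $e_1\cdots e_n$ ($n\ge1$, $r(e_i)=s(e_{i+1})$) with $s(e_1)=r(e_n)$. $L_k(E)$ is the universal $k$-algebra generated by pairwise orthogonal idempotents $p_v$ ($v\in E^0$) and elements $s_e,s_e^*$ ($e\in E^1$) with $p_{s(e)}s_e=s_e=s_ep_{r(e)}$, $p_{r(e)}s_e^*=s_e^*=s_e^*p_{s(e)}$, $s_e^*s_f=\delta_{e,f}p_{r(e)}$, and $p_v=\sum_{s(e)=v}s_es_e^*$ for each regular $v$. Representations $\rho_i:L_k(E)\to\mathrm{End}_k(V_i)$ are algebraically equivalent if $\rho_1(a)=T^{-1}\rho_2(a)T$ for all $a$ for some linear isomorphism $T:V_1\to V_2$; irreducible means the only invariant subspaces are $0$ and the whole space. *)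

theory Defs
  imports Main
begin

text \<open>
Graphs: vertex set E0 :: 'a set, edge set E1 :: 'b set, range r and source s.
No countability is assumed (the types 'a, 'b are arbitrary).
\<close>

definition graph :: "'a set \<Rightarrow> 'b set \<Rightarrow> ('b \<Rightarrow> 'a) \<Rightarrow> ('b \<Rightarrow> 'a) \<Rightarrow> bool" where
  "graph E0 E1 r s \<longleftrightarrow> r ` E1 \<subseteq> E0 \<and> s ` E1 \<subseteq> E0"

definition is_cycle :: "'b set \<Rightarrow> ('b \<Rightarrow> 'a) \<Rightarrow> ('b \<Rightarrow> 'a) \<Rightarrow> 'b list \<Rightarrow> bool" where
  "is_cycle E1 r s c \<longleftrightarrow> c \<noteq> [] \<and> set c \<subseteq> E1 \<and>
     (\<forall>i. Suc i < length c \<longrightarrow> r (c ! i) = s (c ! Suc i)) \<and> s (hd c) = r (last c)"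

definition has_cycle :: "'b set \<Rightarrow> ('b \<Rightarrow> 'a) \<Rightarrow> ('b \<Rightarrow> 'a) \<Rightarrow> bool" where
  "has_cycle E1 r s \<longleftrightarrow> (\<exists>c. is_cycle E1 r s c)"

definition regular_vertex :: "'b set \<Rightarrow> ('b \<Rightarrow> 'a) \<Rightarrow> 'a \<Rightarrow> bool" where
  "regular_vertex E1 s v \<longleftrightarrow> finite {e\<in>E1. s e = v} \<and> {e\<in>E1. s e = v} \<noteq> {}"

text \<open>
Ambient vector space: W = (('a + 'b) list => 'k) with pointwise operations over the field 'k.
Vector spaces on which L_k(E) is represented are k-subspaces V of W; by a cardinality
argument every representation space of an irreducible representation of
L_k(E) is isomorphic to such a subspace.
\<close>

definition subspace :: "('i \<Rightarrow> 'k::field) set \<Rightarrow> bool" where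
  "subspace V \<longleftrightarrow> (\<lambda>i. 0) \<in> V \<and> (\<forall>x\<in>V. \<forall>y\<in>V. (\<lambda>i. x i + y i) \<in> V)
     \<and> (\<forall>c. \<forall>x\<in>V. (\<lambda>i. c * x i) \<in> V)"

definition lin_on :: "('i \<Rightarrow> 'k::field) set \<Rightarrow> (('i \<Rightarrow> 'k) \<Rightarrow> ('j \<Rightarrow> 'k)) \<Rightarrow> bool" where
  "lin_on V f \<longleftrightarrow> (\<forall>x\<in>V. \<forall>y\<in>V. f (\<lambda>i. x i + y i) = (\<lambda>j. f x j + f y j))
     \<and> (\<forall>c. \<forall>x\<in>V. f (\<lambda>i. c * x i) = (\<lambda>j. c * f x j))"

definition eq_on :: "'v set \<Rightarrow> ('v \<Rightarrow> 'w) \<Rightarrow> ('v \<Rightarrow> 'w) \<Rightarrow> bool" where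
  "eq_on V f g \<longleftrightarrow> (\<forall>x\<in>V. f x = g x)"

type_synonym ('a,'b,'k) space = "('a + 'b) list \<Rightarrow> 'k"

text \<open>
Since L_k(E) is the universal k-algebra generated by
p_v, s_e, s_e^* subject to the stated relations, a representation
rho : L_k(E) -> End_k(V) is the same as an assignment of k-linear endomorphisms
P v = rho(p_v), S e = rho(s_e), St e = rho(s_e^* ) of V satisfying these relations.
\<close>
definition LPA_rep ::
  "'a set \<Rightarrow> 'b set \<Rightarrow> ('b \<Rightarrow> 'a) \<Rightarrow> ('b \<Rightarrow> 'a) \<Rightarrow> ('a,'b,'k::field) space set
   \<Rightarrow> ('a \<Rightarrow> ('a,'b,'k) space \<Rightarrow> ('a,'b,'k) space)
   \<Rightarrow> ('b \<Rightarrow> ('a,'b,'k) space \<Rightarrow> ('a,'b,'k) space)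
   \<Rightarrow> ('b \<Rightarrow> ('a,'b,'k) space \<Rightarrow> ('a,'b,'k) space) \<Rightarrow> bool" where
  "LPA_rep E0 E1 r s V P S St \<longleftrightarrow>
     subspace V \<and>
     (\<forall>v\<in>E0. lin_on V (P v) \<and> P v ` V \<subseteq> V) \<and>
     (\<forall>e\<in>E1. lin_on V (S e) \<and> S e ` V \<subseteq> V \<and> lin_on V (St e) \<and> St e ` V \<subseteq> V) \<and>
     (\<forall>v\<in>E0. \<forall>w\<in>E0. eq_on V (P v \<circ> P w) (if v = w then P v else (\<lambda>x i. 0))) \<and>
     (\<forall>e\<in>E1. eq_on V (P (s e) \<circ> S e) (S e) \<and> eq_on V (S e \<circ> P (r e)) (S e)) \<and>
     (\<forall>e\<in>E1. eq_on V (P (r e) \<circ> St e) (St e) \<and> eq_on V (St e \<circ> P (s e)) (St e)) \<and>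
     (\<forall>e\<in>E1. \<forall>f\<in>E1. eq_on V (St e \<circ> S f) (if e = f then P (r e) else (\<lambda>x i. 0))) \<and>
     (\<forall>v\<in>E0. regular_vertex E1 s v \<longrightarrow>
        eq_on V (P v) (\<lambda>x i. \<Sum>e\<in>{e\<in>E1. s e = v}. S e (St e x) i))"

text \<open>U is invariant under the representation, i.e. under all rho(a); since L_k(E) is generated
as an algebra by the p_v, s_e, s_e^*, this is invariance under the generators.\<close>
definition invariant ::
  "'a set \<Rightarrow> 'b set \<Rightarrow> ('v \<Rightarrow> 'k::field) set
   \<Rightarrow> ('a \<Rightarrow> ('v \<Rightarrow> 'k) \<Rightarrow> ('v \<Rightarrow> 'k)) \<Rightarrow> ('b \<Rightarrow> ('v \<Rightarrow> 'k) \<Rightarrow> ('v \<Rightarrow> 'k))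
   \<Rightarrow> ('b \<Rightarrow> ('v \<Rightarrow> 'k) \<Rightarrow> ('v \<Rightarrow> 'k)) \<Rightarrow> bool" where
  "invariant E0 E1 U P S St \<longleftrightarrow>
     (\<forall>v\<in>E0. P v ` U \<subseteq> U) \<and> (\<forall>e\<in>E1. S e ` U \<subseteq> U \<and> St e ` U \<subseteq> U)"

definition irreducible_rep where
  "irreducible_rep E0 E1 r s V P S St \<longleftrightarrow>
     LPA_rep E0 E1 r s V P S St \<and> V \<noteq> {\<lambda>i. 0} \<and>
     (\<exists>x\<in>V. (\<exists>v\<in>E0. P v x \<noteq> (\<lambda>i. 0)) \<or> (\<exists>e\<in>E1. S e x \<noteq> (\<lambda>i. 0) \<or> St e x \<noteq> (\<lambda>i. 0))) \<and>
     (\<forall>U. subspace U \<and> U \<subseteq> V \<and> invariant E0 E1 U P S St \<longrightarrow> U = {\<lambda>i. 0} \<or> U = V)"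

text \<open>Algebraic equivalence: rho1(a) = T^-1 rho2(a) T for a linear isomorphism T : V1 -> V2;
equivalently T rho1(g) = rho2(g) T on V1 for all generators g.\<close>
definition alg_equiv where
  "alg_equiv E0 E1 V1 P1 S1 St1 V2 P2 S2 St2 \<longleftrightarrow>
     (\<exists>T. bij_betw T V1 V2 \<and> lin_on V1 T \<and>
        (\<forall>v\<in>E0. \<forall>x\<in>V1. T (P1 v x) = P2 v (T x)) \<and>
        (\<forall>e\<in>E1. \<forall>x\<in>V1. T (S1 e x) = S2 e (T x) \<and> T (St1 e x) = St2 e (T x)))"

end

theory Submission
  imports Defs "HOL-Library.Nat_Bijection"
begin

definition sh :: "nat \<Rightarrow> (nat \<Rightarrow> 'b) \<Rightarrow> nat \<Rightarrow> 'b" where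
  "sh n q = (\<lambda>i. q (i + n))"

definition cns :: "'b \<Rightarrow> (nat \<Rightarrow> 'b) \<Rightarrow> nat \<Rightarrow> 'b" where
  "cns e q = case_nat e q"

lemma sh_0[simp]: "sh 0 q = q" by (simp add: sh_def)
lemma sh_sh[simp]: "sh n (sh m q) = sh (n + m) q" by (simp add: sh_def ac_simps)
lemma sh_app[simp]: "sh n q i = q (i + n)" by (simp add: sh_def)
lemma cns_0[simp]: "cns e q 0 = e" by (simp add: cns_def)
lemma cns_Suc[simp]: "cns e q (Suc i) = q i" by (simp add: cns_def)
lemma sh1_cns[simp]: "sh (Suc 0) (cns e q) = q" by (simp add: fun_eq_iff)
lemma cns_sh1: "cns (q 0) (sh (Suc 0) q) = q"
  by (simp add: fun_eq_iff cns_def split: nat.split)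
lemma cns_sh: "cns (q n) (sh (Suc n) q) = sh n q"
  by (simp add: fun_eq_iff cns_def split: nat.split)
lemma cns_inj[simp]: "cns e q = cns e' q' \<longleftrightarrow> e = e' \<and> q = q'"
  by (auto simp: cns_def fun_eq_iff split: nat.split)

abbreviation zv :: "nat \<Rightarrow> 'k::zero" where "zv \<equiv> (\<lambda>j. 0)"

definition delta :: "'q \<Rightarrow> (nat \<Rightarrow> 'k::zero) \<Rightarrow> 'q \<Rightarrow> nat \<Rightarrow> 'k" where
  "delta q l = (\<lambda>q'. if q' = q then l else zv)"

definition supp :: "('q \<Rightarrow> nat \<Rightarrow> 'k::zero) \<Rightarrow> 'q set" where
  "supp F = {q. F q \<noteq> zv}"

locale chen =
  fixes E0 :: "'a set" and E1 :: "'b set" and r s :: "'b \<Rightarrow> 'a"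
    and p0 :: "nat \<Rightarrow> 'b" and d :: nat
    and L :: "(nat \<Rightarrow> 'k::field) set" and X Xi :: "(nat \<Rightarrow> 'k) \<Rightarrow> nat \<Rightarrow> 'k"
  assumes gr: "graph E0 E1 r s"
    and p0_path: "\<And>i. p0 i \<in> E1 \<and> r (p0 i) = s (p0 (Suc i))"
    and d_pos: "0 < d" and d_per: "sh d p0 = p0"
    and d_min: "\<And>j. 0 < j \<Longrightarrow> j < d \<Longrightarrow> sh j p0 \<noteq> p0"
    and L_sub: "subspace L"
    and X_lin: "lin_on L X" and Xi_lin: "lin_on L Xi"
    and X_L: "\<And>l. l \<in> L \<Longrightarrow> X l \<in> L" and Xi_L: "\<And>l. l \<in> L \<Longrightarrow> Xi l \<in> L"
    and X_Xi: "\<And>l. l \<in> L \<Longrightarrow> X (Xi l) = l" and Xi_X: "\<And>l. l \<in> L \<Longrightarrow> Xi (X l) = l"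
    and L_irr: "\<And>U. U \<subseteq> L \<Longrightarrow> (\<forall>x\<in>U. \<forall>y\<in>U. (\<lambda>i. x i + y i) \<in> U) \<Longrightarrow>
        (\<forall>c. \<forall>x\<in>U. (\<lambda>i. c * x i) \<in> U) \<Longrightarrow> (\<forall>x\<in>U. X x \<in> U) \<Longrightarrow> (\<exists>x\<in>U. x \<noteq> zv) \<Longrightarrow> L \<subseteq> U"
begin

definition T :: "(nat \<Rightarrow> 'b) set" where
  "T = {q. (\<forall>i. q i \<in> E1 \<and> r (q i) = s (q (Suc i))) \<and> (\<exists>n m. sh n q = sh m p0)}"

lemma p0_T: "p0 \<in> T" unfolding T_def using p0_path by auto

lemma T_sh: assumes "q \<in> T" shows "sh n q \<in> T"
proof -
  from assms obtain n' m where h: "\<forall>i. q i \<in> E1 \<and> r (q i) = s (q (Suc i))" "sh n' q = sh m p0"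
    unfolding T_def by auto
  have "sh n' (sh n q) = sh (n + m) p0"
    using arg_cong[OF h(2), of "sh n"] by (simp add: add.commute)
  then show ?thesis using h(1) unfolding T_def by auto
qed

lemma T_path: "q \<in> T \<Longrightarrow> q i \<in> E1 \<and> r (q i) = s (q (Suc i))"
  unfolding T_def by auto

lemma T_cns: "q \<in> T \<Longrightarrow> e \<in> E1 \<Longrightarrow> r e = s (q 0) \<Longrightarrow> cns e q \<in> T"
  unfolding T_def
proof (clarsimp)
  fix n m assume h: "\<forall>i. q i \<in> E1 \<and> r (q i) = s (q (Suc i))" "sh n q = sh m p0" "e \<in> E1" "r e = s (q 0)"
  have "sh (Suc n) (cns e q) = sh m p0" using h(2) by (simp add: fun_eq_iff)
  moreover have "\<forall>i. cns e q i \<in> E1 \<and> r (cns e q i) = s (cns e q (Suc i))"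
    using h by (auto simp: cns_def split: nat.split)
  ultimately show "(\<forall>i. cns e q i \<in> E1 \<and> r (cns e q i) = s (q i)) \<and> (\<exists>n m. sh n (cns e q) = sh m p0)"
    by auto
qed

definition enc :: "(nat \<Rightarrow> 'b) \<times> nat \<Rightarrow> ('a + 'b) list" where
  "enc qj = (let q = fst qj; nm = (SOME nm. sh (fst nm) q = sh (snd nm) p0)
     in map Inr (map q [0..<fst nm]) @ replicate (prod_encode (snd nm, snd qj)) (Inl undefined))"

lemma enc_aux: "map Inr xs @ replicate k (Inl u) = map Inr xs' @ replicate k' (Inl u) \<Longrightarrow> xs = xs' \<and> k = k'"
proof -
  assume h: "map Inr xs @ replicate k (Inl u) = map Inr xs' @ replicate k' (Inl u)"
  have "map projr (filter (\<lambda>x. \<not> isl x) (map Inr xs @ replicate k (Inl u))) = xs"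
    by (induct xs) auto
  moreover have "map projr (filter (\<lambda>x. \<not> isl x) (map Inr xs' @ replicate k' (Inl u))) = xs'"
    by (induct xs') auto
  moreover have "length (filter isl (map Inr xs @ replicate k (Inl u))) = k"
    by (induct xs) auto
  moreover have "length (filter isl (map Inr xs' @ replicate k' (Inl u))) = k'"
    by (induct xs') auto
  ultimately show ?thesis using h by metis
qed

lemma enc_inj: "inj_on enc (T \<times> UNIV)"
proof (rule inj_onI, clarify)
  fix q j q' j'
  assume q: "q \<in> T" and q': "q' \<in> T" and e: "enc (q, j) = enc (q', j')"
  define nm where "nm = (SOME nm. sh (fst nm) q = sh (snd nm) p0)"
  define nm' where "nm' = (SOME nm. sh (fst nm) q' = sh (snd nm) p0)"
  have "\<exists>nm. sh (fst nm) q = sh (snd nm) p0" using q unfolding T_def by auto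
  then have nm: "sh (fst nm) q = sh (snd nm) p0" unfolding nm_def by (rule someI_ex)
  have "\<exists>nm. sh (fst nm) q' = sh (snd nm) p0" using q' unfolding T_def by auto
  then have nm': "sh (fst nm') q' = sh (snd nm') p0" unfolding nm'_def by (rule someI_ex)
  from e have "map q [0..<fst nm] = map q' [0..<fst nm'] \<and> prod_encode (snd nm, j) = prod_encode (snd nm', j')"
    unfolding enc_def Let_def nm_def[symmetric] nm'_def[symmetric] fst_conv snd_conv
    using enc_aux by (metis list.map_comp)
  then have a: "map q [0..<fst nm] = map q' [0..<fst nm']" and b: "snd nm = snd nm'" "j = j'" by auto
  from a have len: "fst nm = fst nm'" by (metis length_map length_upt minus_nat.diff_0)
  have "q i = q' i" for i
  proof (cases "i < fst nm")
    case True then show ?thesis using a len by (metis add_0 diff_zero nth_map nth_upt length_upt)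
  next
    case False
    then obtain k where i: "i = k + fst nm" by (metis add.commute le_add_diff_inverse not_less)
    have "q i = sh (snd nm) p0 k" using nm i by (metis sh_app)
    also have "\<dots> = q' i" using nm' i len b by (metis sh_app)
    finally show ?thesis .
  qed
  then show "q = q' \<and> j = j'" using b by auto
qed

end

context chen
begin

lemma zv_L: "zv \<in> L" using L_sub unfolding subspace_def by auto
lemma L_add: "x \<in> L \<Longrightarrow> y \<in> L \<Longrightarrow> (\<lambda>i. x i + y i) \<in> L" using L_sub unfolding subspace_def by auto
lemma L_smult: "x \<in> L \<Longrightarrow> (\<lambda>i. c * x i) \<in> L" using L_sub unfolding subspace_def by auto

lemma X_zv[simp]: "X zv = zv"
proof -
  have "\<forall>c. \<forall>x\<in>L. X (\<lambda>i. c * x i) = (\<lambda>j. c * X x j)" using X_lin by (simp add: lin_on_def)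
  from this[rule_format, OF zv_L, of 0] show ?thesis by simp
qed
lemma Xi_zv[simp]: "Xi zv = zv"
proof -
  have "\<forall>c. \<forall>x\<in>L. Xi (\<lambda>i. c * x i) = (\<lambda>j. c * Xi x j)" using Xi_lin by (simp add: lin_on_def)
  from this[rule_format, OF zv_L, of 0] show ?thesis by simp
qed

definition tw :: "(nat \<Rightarrow> 'b) \<Rightarrow> (nat \<Rightarrow> 'k) \<Rightarrow> nat \<Rightarrow> 'k" where
  "tw q = (if q = p0 then X else id)"
definition twi :: "(nat \<Rightarrow> 'b) \<Rightarrow> (nat \<Rightarrow> 'k) \<Rightarrow> nat \<Rightarrow> 'k" where
  "twi q = (if q = p0 then Xi else id)"

lemma tw_L: "l \<in> L \<Longrightarrow> tw q l \<in> L" by (simp add: tw_def X_L)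
lemma twi_L: "l \<in> L \<Longrightarrow> twi q l \<in> L" by (simp add: twi_def Xi_L)
lemma tw_zv[simp]: "tw q zv = zv" by (simp add: tw_def)
lemma twi_zv[simp]: "twi q zv = zv" by (simp add: twi_def)
lemma tw_twi[simp]: "l \<in> L \<Longrightarrow> tw q (twi q l) = l" by (simp add: tw_def twi_def X_Xi)
lemma twi_tw[simp]: "l \<in> L \<Longrightarrow> twi q (tw q l) = l" by (simp add: tw_def twi_def Xi_X)
lemma tw_nz: "l \<in> L \<Longrightarrow> tw q l = zv \<Longrightarrow> l = zv" by (metis twi_tw twi_zv)
lemma twi_nz: "l \<in> L \<Longrightarrow> twi q l = zv \<Longrightarrow> l = zv" by (metis tw_twi tw_zv)
lemma tw_add: "x \<in> L \<Longrightarrow> y \<in> L \<Longrightarrow> tw q (\<lambda>i. x i + y i) = (\<lambda>j. tw q x j + tw q y j)"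
  using X_lin by (simp add: tw_def lin_on_def)
lemma twi_add: "x \<in> L \<Longrightarrow> y \<in> L \<Longrightarrow> twi q (\<lambda>i. x i + y i) = (\<lambda>j. twi q x j + twi q y j)"
  using Xi_lin by (simp add: twi_def lin_on_def)
lemma tw_smult: "x \<in> L \<Longrightarrow> tw q (\<lambda>i. c * x i) = (\<lambda>j. c * tw q x j)"
  using X_lin by (simp add: tw_def lin_on_def)
lemma twi_smult: "x \<in> L \<Longrightarrow> twi q (\<lambda>i. c * x i) = (\<lambda>j. c * twi q x j)"
  using Xi_lin by (simp add: twi_def lin_on_def)

definition nS :: "'b \<Rightarrow> ((nat \<Rightarrow> 'b) \<Rightarrow> nat \<Rightarrow> 'k) \<Rightarrow> (nat \<Rightarrow> 'b) \<Rightarrow> nat \<Rightarrow> 'k" where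
  "nS e F = (\<lambda>q. if q \<in> T \<and> q 0 = e then tw q (F (sh 1 q)) else zv)"
definition nSt :: "'b \<Rightarrow> ((nat \<Rightarrow> 'b) \<Rightarrow> nat \<Rightarrow> 'k) \<Rightarrow> (nat \<Rightarrow> 'b) \<Rightarrow> nat \<Rightarrow> 'k" where
  "nSt e F = (\<lambda>q. if q \<in> T \<and> e \<in> E1 \<and> r e = s (q 0) then twi (cns e q) (F (cns e q)) else zv)"
definition nP :: "'a \<Rightarrow> ((nat \<Rightarrow> 'b) \<Rightarrow> nat \<Rightarrow> 'k) \<Rightarrow> (nat \<Rightarrow> 'b) \<Rightarrow> nat \<Rightarrow> 'k" where
  "nP v F = (\<lambda>q. if q \<in> T \<and> s (q 0) = v then F q else zv)"

definition Vn :: "((nat \<Rightarrow> 'b) \<Rightarrow> nat \<Rightarrow> 'k) set" where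
  "Vn = {F. finite (supp F) \<and> supp F \<subseteq> T \<and> (\<forall>q. F q \<in> L)}"

lemma VnD: assumes "F \<in> Vn" shows "finite (supp F)" "\<And>q. F q \<noteq> zv \<Longrightarrow> q \<in> T" "\<And>q. F q \<in> L"
  using assms unfolding Vn_def supp_def by auto

lemma nS_Vn: assumes F: "F \<in> Vn" shows "nS e F \<in> Vn"
proof -
  have "supp (nS e F) \<subseteq> cns e ` supp F"
  proof
    fix q assume "q \<in> supp (nS e F)"
    then have q: "q \<in> T" "q 0 = e" "tw q (F (sh 1 q)) \<noteq> zv" by (auto simp: supp_def nS_def split: if_splits)
    then have "F (sh 1 q) \<noteq> zv" by auto
    then show "q \<in> cns e ` supp F" using q cns_sh1[of q] by (force simp: supp_def)
  qed
  then have "finite (supp (nS e F))" using VnD(1)[OF F] by (meson finite_imageI finite_subset)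
  moreover have "supp (nS e F) \<subseteq> T" by (auto simp: supp_def nS_def)
  moreover have "\<forall>q. nS e F q \<in> L" using VnD(3)[OF F] by (simp add: nS_def tw_L zv_L)
  ultimately show ?thesis by (simp add: Vn_def)
qed

lemma nSt_Vn: assumes F: "F \<in> Vn" shows "nSt e F \<in> Vn"
proof -
  have "supp (nSt e F) \<subseteq> cns e -` supp F"
    by (auto simp: supp_def nSt_def split: if_splits)
  moreover have "finite (cns e -` supp F)"
    using VnD(1)[OF F] by (rule finite_vimageI) (simp add: inj_on_def)
  ultimately have "finite (supp (nSt e F))" by (meson finite_subset)
  moreover have "supp (nSt e F) \<subseteq> T" by (auto simp: supp_def nSt_def)
  moreover have "\<forall>q. nSt e F q \<in> L" using VnD(3)[OF F] by (simp add: nSt_def twi_L zv_L)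
  ultimately show ?thesis by (simp add: Vn_def)
qed

lemma nP_Vn: assumes F: "F \<in> Vn" shows "nP v F \<in> Vn"
proof -
  have "supp (nP v F) \<subseteq> supp F" by (auto simp: supp_def nP_def)
  then have "finite (supp (nP v F))" using VnD(1)[OF F] by (meson finite_subset)
  moreover have "supp (nP v F) \<subseteq> T" by (auto simp: supp_def nP_def)
  moreover have "\<forall>q. nP v F q \<in> L" using VnD(3)[OF F] by (simp add: nP_def zv_L)
  ultimately show ?thesis by (simp add: Vn_def)
qed

lemma rel_PP: "nP v (nP w F) = (if v = w then nP v F else (\<lambda>q. zv))"
  by (auto simp: nP_def fun_eq_iff)

lemma rel_PS: "nP (s e) (nS e F) = nS e F"
  by (auto simp: nP_def nS_def fun_eq_iff)

lemma rel_SP: "e \<in> E1 \<Longrightarrow> nS e (nP (r e) F) = nS e F"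
proof -
  have "q \<in> T \<Longrightarrow> sh 1 q \<in> T \<and> s (sh 1 q 0) = r (q 0)" for q
    using T_sh T_path[of q 0] by auto
  then show ?thesis by (auto simp: nP_def nS_def fun_eq_iff)
qed

lemma rel_PSt: "nP (r e) (nSt e F) = nSt e F"
  by (auto simp: nP_def nSt_def fun_eq_iff)

lemma rel_StP: "nSt e (nP (s e) F) = nSt e F"
  by (auto simp: nP_def nSt_def fun_eq_iff T_cns)

lemma rel_StS: assumes F: "F \<in> Vn" and e: "e \<in> E1"
  shows "nSt e (nS f F) = (if e = f then nP (r e) F else (\<lambda>q. zv))"
  using VnD(3)[OF F] e by (auto simp: nP_def nSt_def nS_def fun_eq_iff T_cns)

lemma rel_CK: assumes F: "F \<in> Vn" and fin: "finite {e\<in>E1. s e = v}"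
  shows "nP v F = (\<lambda>q j. \<Sum>e\<in>{e\<in>E1. s e = v}. nS e (nSt e F) q j)"
proof (rule ext, rule ext)
  fix q j
  have SSt: "nS e (nSt e F) q = (if q \<in> T \<and> q 0 = e then F q else zv)" for e
  proof (cases "q \<in> T \<and> q 0 = e")
    case True
    then have "sh 1 q \<in> T" "e \<in> E1" "r e = s (sh 1 q 0)" using T_sh T_path[of q 0] by auto
    moreover have "cns e (sh 1 q) = q" using True cns_sh1[of q] by auto
    ultimately show ?thesis using True VnD(3)[OF F] by (simp add: nS_def nSt_def)
  qed (auto simp: nS_def)
  have "(\<Sum>e\<in>{e\<in>E1. s e = v}. nS e (nSt e F) q j) =
        (\<Sum>e\<in>{e\<in>E1. s e = v}. if q 0 = e then (if q \<in> T then F q j else 0) else 0)"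
    by (rule sum.cong) (auto simp: SSt)
  also have "\<dots> = (if q 0 \<in> {e\<in>E1. s e = v} then (if q \<in> T then F q j else 0) else 0)"
    using fin by (simp add: sum.delta)
  also have "\<dots> = nP v F q j"
    using T_path[of q 0] by (auto simp: nP_def)
  finally show "nP v F q j = (\<Sum>e\<in>{e\<in>E1. s e = v}. nS e (nSt e F) q j)" by simp
qed

lemma nS_add: assumes "F \<in> Vn" "G \<in> Vn" shows "nS e (\<lambda>q j. F q j + G q j) = (\<lambda>q j. nS e F q j + nS e G q j)"
  using VnD(3)[OF assms(1)] VnD(3)[OF assms(2)] by (auto simp: nS_def fun_eq_iff tw_add)
lemma nSt_add: assumes "F \<in> Vn" "G \<in> Vn" shows "nSt e (\<lambda>q j. F q j + G q j) = (\<lambda>q j. nSt e F q j + nSt e G q j)"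
  using VnD(3)[OF assms(1)] VnD(3)[OF assms(2)] by (auto simp: nSt_def fun_eq_iff twi_add)
lemma nP_add: "nP v (\<lambda>q j. F q j + G q j) = (\<lambda>q j. nP v F q j + nP v G q j)"
  by (auto simp: nP_def fun_eq_iff)
lemma nS_smult: assumes "F \<in> Vn" shows "nS e (\<lambda>q j. c * F q j) = (\<lambda>q j. c * nS e F q j)"
  using VnD(3)[OF assms(1)] by (auto simp: nS_def fun_eq_iff tw_smult)
lemma nSt_smult: assumes "F \<in> Vn" shows "nSt e (\<lambda>q j. c * F q j) = (\<lambda>q j. c * nSt e F q j)"
  using VnD(3)[OF assms(1)] by (auto simp: nSt_def fun_eq_iff twi_smult)
lemma nP_smult: "nP v (\<lambda>q j. c * F q j) = (\<lambda>q j. c * nP v F q j)"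
  by (auto simp: nP_def fun_eq_iff)

lemma Vn_zero: "(\<lambda>q. zv) \<in> Vn" by (simp add: Vn_def supp_def zv_L)
lemma Vn_add: "F \<in> Vn \<Longrightarrow> G \<in> Vn \<Longrightarrow> (\<lambda>q j. F q j + G q j) \<in> Vn"
proof -
  assume F: "F \<in> Vn" and G: "G \<in> Vn"
  have "supp (\<lambda>q j. F q j + G q j) \<subseteq> supp F \<union> supp G" by (auto simp: supp_def)
  then show ?thesis using VnD[OF F] VnD[OF G] unfolding Vn_def
    by (auto intro: finite_subset L_add simp: supp_def)
qed
lemma Vn_smult: "F \<in> Vn \<Longrightarrow> (\<lambda>q j. c * F q j) \<in> Vn"
proof -
  assume F: "F \<in> Vn"
  have "supp (\<lambda>q j. c * F q j) \<subseteq> supp F" by (auto simp: supp_def)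
  then show ?thesis using VnD[OF F] unfolding Vn_def
    by (auto intro: finite_subset L_smult simp: supp_def)
qed

end

context chen
begin

lemma SSt: assumes F: "F \<in> Vn" shows "nS e (nSt e F) q = (if q \<in> T \<and> q 0 = e then F q else zv)"
proof (cases "q \<in> T \<and> q 0 = e")
  case True
  then have "sh 1 q \<in> T" "e \<in> E1" "r e = s (sh 1 q 0)" using T_sh T_path[of q 0] by auto
  moreover have "cns e (sh 1 q) = q" using True cns_sh1[of q] by auto
  ultimately show ?thesis using True VnD(3)[OF F] by (simp add: nS_def nSt_def)
qed (auto simp: nS_def)

lemma delta_S: assumes "q \<in> T" "e \<in> E1" "r e = s (q 0)"
  shows "nS e (delta q l) = delta (cns e q) (tw (cns e q) l)"
proof (rule ext)
  fix q'
  show "nS e (delta q l) q' = delta (cns e q) (tw (cns e q) l) q'"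
  proof (cases "q' = cns e q")
    case True then show ?thesis using assms T_cns by (simp add: nS_def delta_def)
  next
    case False
    have "\<not> (q' 0 = e \<and> sh 1 q' = q)" using False cns_sh1[of q'] by auto
    then show ?thesis using False by (auto simp: nS_def delta_def)
  qed
qed

lemma delta_St: assumes "q \<in> T"
  shows "nSt (q 0) (delta q l) = delta (sh 1 q) (twi q l)"
proof (rule ext)
  fix q'
  show "nSt (q 0) (delta q l) q' = delta (sh 1 q) (twi q l) q'"
  proof (cases "q' = sh 1 q")
    case True then show ?thesis using assms T_sh T_path[of q 0] cns_sh1[of q]
      by (simp add: nSt_def delta_def)
  next
    case False
    have "cns (q 0) q' \<noteq> q" using False by (metis sh1_cns One_nat_def)
    then show ?thesis using False by (auto simp: nSt_def delta_def)
  qed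
qed

definition Uinv where
  "Uinv U \<longleftrightarrow> U \<subseteq> Vn \<and> (\<lambda>q. zv) \<in> U \<and> (\<forall>F\<in>U. \<forall>G\<in>U. (\<lambda>q j. F q j + G q j) \<in> U) \<and>
     (\<forall>c. \<forall>F\<in>U. (\<lambda>q j. c * F q j) \<in> U) \<and> (\<forall>e\<in>E1. \<forall>F\<in>U. nS e F \<in> U \<and> nSt e F \<in> U)"

lemma card_St: assumes F: "F \<in> Vn" shows "card (supp (nSt e F)) \<le> card (supp F)"
proof -
  have "cns e ` supp (nSt e F) \<subseteq> supp F"
    by (auto simp: supp_def nSt_def split: if_splits)
  moreover have "inj_on (cns e) (supp (nSt e F))" by (simp add: inj_on_def)
  ultimately show ?thesis using VnD(1)[OF F] by (intro card_inj_on_le) auto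
qed

lemma diff_step:
  assumes U: "Uinv U"
  shows "\<forall>F q1 q2. F \<in> U \<and> F q1 \<noteq> zv \<and> F q2 \<noteq> zv \<and> (\<forall>i<k. q1 i = q2 i) \<and> q1 k \<noteq> q2 k \<longrightarrow>
     (\<exists>G\<in>U. G \<noteq> (\<lambda>q. zv) \<and> card (supp G) < card (supp F))"
proof (induction k)
  case 0
  show ?case
  proof (intro allI impI)
    fix F q1 q2 assume h: "F \<in> U \<and> F q1 \<noteq> zv \<and> F q2 \<noteq> zv \<and> (\<forall>i<0. q1 i = q2 i) \<and> q1 0 \<noteq> q2 0"
    have F: "F \<in> Vn" using h U by (auto simp: Uinv_def)
    have q1: "q1 \<in> T" using h VnD(2)[OF F] by auto
    define G where "G = nS (q1 0) (nSt (q1 0) F)"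
    have "G \<in> U" using U h T_path[OF q1, of 0] by (auto simp: Uinv_def G_def)
    have Gq: "G q = (if q \<in> T \<and> q 0 = q1 0 then F q else zv)" for q
      unfolding G_def using SSt[OF F] by simp
    have "G q1 \<noteq> zv" using Gq q1 h by auto
    then have "G \<noteq> (\<lambda>q. zv)" by auto
    moreover have "supp G \<subset> supp F"
    proof
      show "supp G \<subseteq> supp F" using Gq by (auto simp: supp_def)
      have "q2 \<in> supp F - supp G" using Gq h by (auto simp: supp_def)
      then show "supp G \<noteq> supp F" by blast
    qed
    then have "card (supp G) < card (supp F)" using VnD(1)[OF F] by (rule psubset_card_mono[rotated])
    ultimately show "\<exists>G\<in>U. G \<noteq> (\<lambda>q. zv) \<and> card (supp G) < card (supp F)" using \<open>G \<in> U\<close> by blast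
  qed
next
  case (Suc k)
  show ?case
  proof (intro allI impI)
    fix F q1 q2 assume h: "F \<in> U \<and> F q1 \<noteq> zv \<and> F q2 \<noteq> zv \<and> (\<forall>i<Suc k. q1 i = q2 i) \<and> q1 (Suc k) \<noteq> q2 (Suc k)"
    have F: "F \<in> Vn" using h U by (auto simp: Uinv_def)
    have q1: "q1 \<in> T" and q2: "q2 \<in> T" using h VnD(2)[OF F] by auto
    define e where "e = q1 0"
    have e2: "q2 0 = e" using h e_def by auto
    define G where "G = nSt e F"
    have GU: "G \<in> U" using U h T_path[OF q1, of 0] by (auto simp: Uinv_def G_def e_def)
    have GV: "G \<in> Vn" using GU U by (auto simp: Uinv_def)
    have G1: "G (sh 1 q1) = twi q1 (F q1)"
      using T_sh[OF q1] T_path[OF q1, of 0] cns_sh1[of q1] by (simp add: G_def nSt_def e_def)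
    have G2: "G (sh 1 q2) = twi q2 (F q2)"
      using T_sh[OF q2] T_path[OF q2, of 0] cns_sh1[of q2] e2 by (simp add: G_def nSt_def e_def)
    have "G (sh 1 q1) \<noteq> zv" "G (sh 1 q2) \<noteq> zv"
      using G1 G2 h twi_nz[OF VnD(3)[OF F]] by auto
    moreover have "\<forall>i<k. sh 1 q1 i = sh 1 q2 i" "sh 1 q1 k \<noteq> sh 1 q2 k" using h by auto
    ultimately obtain H where "H \<in> U" "H \<noteq> (\<lambda>q. zv)" "card (supp H) < card (supp G)"
      using Suc.IH GU by blast
    moreover have "card (supp G) \<le> card (supp F)" unfolding G_def by (rule card_St[OF F])
    ultimately show "\<exists>G\<in>U. G \<noteq> (\<lambda>q. zv) \<and> card (supp G) < card (supp F)" by force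
  qed
qed

lemma isolate:
  assumes U: "Uinv U"
  shows "F \<in> U \<Longrightarrow> F \<noteq> (\<lambda>q. zv) \<Longrightarrow> \<exists>G\<in>U. \<exists>q. G q \<noteq> zv \<and> supp G = {q}"
proof (induction "card (supp F)" arbitrary: F rule: less_induct)
  case less
  have F: "F \<in> Vn" using less U by (auto simp: Uinv_def)
  have "\<exists>q. F q \<noteq> zv"
  proof (rule ccontr)
    assume "\<not> ?thesis" then have "F = (\<lambda>q. zv)" by auto
    with less.prems show False by simp
  qed
  then obtain q1 where q1: "F q1 \<noteq> zv" by blast
  show ?case
  proof (cases "\<exists>q2. q2 \<noteq> q1 \<and> F q2 \<noteq> zv")
    case True
    then obtain q2 where q2: "q2 \<noteq> q1" "F q2 \<noteq> zv" by auto
    have "\<exists>k. q1 k \<noteq> q2 k"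
    proof (rule ccontr)
      assume "\<not> ?thesis" then have "q1 = q2" by auto
      with q2(1) show False by simp
    qed
    then obtain k0 where "q1 k0 \<noteq> q2 k0" by blast
    define k where "k = (LEAST k. q1 k \<noteq> q2 k)"
    have k: "q1 k \<noteq> q2 k" unfolding k_def by (rule LeastI, fact)
    have "\<forall>i<k. q1 i = q2 i" unfolding k_def using not_less_Least by blast
    then obtain G where "G \<in> U" "G \<noteq> (\<lambda>q. zv)" "card (supp G) < card (supp F)"
      using diff_step[OF U, of k] less.prems q1 q2 k by blast
    then show ?thesis using less.hyps by blast
  next
    case False
    then have "supp F = {q1}" using q1 by (auto simp: supp_def)
    then show ?thesis using q1 less.prems by blast
  qed
qed

lemma conn_down: assumes cl: "\<And>q. q \<in> T \<Longrightarrow> Pr q \<Longrightarrow> Pr (sh 1 q)"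
  shows "q \<in> T \<Longrightarrow> Pr q \<Longrightarrow> Pr (sh n q)"
proof (induction n)
  case (Suc n)
  have "Pr (sh 1 (sh n q))" by (rule cl[OF T_sh[OF Suc.prems(1)] Suc.IH[OF Suc.prems]])
  then show ?case by (simp del: sh_app)
qed simp

lemma conn_up: assumes cl: "\<And>q e. q \<in> T \<Longrightarrow> e \<in> E1 \<Longrightarrow> r e = s (q 0) \<Longrightarrow> Pr q \<Longrightarrow> Pr (cns e q)"
  shows "q \<in> T \<Longrightarrow> Pr (sh n q) \<Longrightarrow> Pr q"
proof (induction n arbitrary: q)
  case (Suc n)
  have "Pr (sh 1 q)" by (rule Suc.IH[OF T_sh[OF Suc.prems(1)]]) (simp del: sh_app add: Suc.prems(2))
  then have "Pr (cns (q 0) (sh 1 q))" using cl T_sh[OF Suc.prems(1)] T_path[OF Suc.prems(1), of 0] by simp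
  then show ?case using cns_sh1[of q] by simp
qed simp

lemma conn:
  assumes down: "\<And>q. q \<in> T \<Longrightarrow> Pr q \<Longrightarrow> Pr (sh 1 q)"
    and up: "\<And>q e. q \<in> T \<Longrightarrow> e \<in> E1 \<Longrightarrow> r e = s (q 0) \<Longrightarrow> Pr q \<Longrightarrow> Pr (cns e q)"
    and a: "a \<in> T" "Pr a" and b: "b \<in> T"
  shows "Pr b"
proof -
  obtain n m where nm: "sh n a = sh m p0" using a unfolding T_def by auto
  obtain n' m' where nm': "sh n' b = sh m' p0" using b unfolding T_def by auto
  have "Pr (sh n a)" using conn_down[where Pr=Pr and q=a and n=n] down a by blast
  then have "Pr (sh m p0)" unfolding nm .
  then have "Pr p0" using conn_up[where Pr=Pr and q=p0 and n=m] up p0_T by blast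
  then have "Pr (sh m' p0)" using conn_down[where Pr=Pr and q=p0 and n=m'] down p0_T by blast
  then have "Pr (sh n' b)" unfolding nm' .
  then show ?thesis using conn_up[where Pr=Pr and q=b and n=n'] up b by blast
qed

definition zs where "zs F = foldr nS (map p0 [0..<d]) F"

lemma foldr_U: assumes U: "Uinv U" shows "set es \<subseteq> E1 \<Longrightarrow> F \<in> U \<Longrightarrow> foldr nS es F \<in> U"
  using U by (induct es) (auto simp: Uinv_def)

lemma zs_U: "Uinv U \<Longrightarrow> F \<in> U \<Longrightarrow> zs F \<in> U"
  unfolding zs_def by (rule foldr_U) (use p0_path in auto)

lemma zs_delta: assumes l: "l \<in> L" shows "zs (delta p0 l) = delta p0 (X l)"
proof -
  have main: "k < d \<Longrightarrow> foldr nS (map p0 [d - k..<d]) (delta p0 l) = delta (sh (d - k) p0) l" for k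
  proof (induction k)
    case 0 then show ?case using d_per by simp
  next
    case (Suc k)
    define j where "j = d - Suc k"
    have j: "j < d" "0 < j" "Suc j = d - k" using Suc.prems unfolding j_def by auto
    have "[d - Suc k..<d] = j # [d - k..<d]" using j by (simp add: j_def upt_conv_Cons)
    then have "foldr nS (map p0 [d - Suc k..<d]) (delta p0 l) = nS (p0 j) (delta (sh (Suc j) p0) l)"
      using Suc j by (simp del: sh_app)
    also have "\<dots> = delta (cns (p0 j) (sh (Suc j) p0)) (tw (cns (p0 j) (sh (Suc j) p0)) l)"
      by (rule delta_S) (use T_sh[OF p0_T] p0_path in auto)
    also have "cns (p0 j) (sh (Suc j) p0) = sh j p0" by (rule cns_sh)
    also have "tw (sh j p0) l = l" using d_min[OF j(2) j(1)] by (simp add: tw_def)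
    finally show ?case by (simp add: j_def)
  qed
  have "[0..<d] = 0 # [1..<d]" using d_pos by (simp add: upt_conv_Cons)
  then have "zs (delta p0 l) = nS (p0 0) (foldr nS (map p0 [d - (d - 1)..<d]) (delta p0 l))"
    using d_pos by (simp add: zs_def)
  also have "\<dots> = nS (p0 0) (delta (sh 1 p0) l)" using main[of "d - 1"] d_pos by simp
  also have "\<dots> = delta (cns (p0 0) (sh 1 p0)) (tw (cns (p0 0) (sh 1 p0)) l)"
    by (rule delta_S) (use T_sh[OF p0_T] p0_path in auto)
  also have "\<dots> = delta p0 (X l)" using cns_sh1[of p0] by (simp add: tw_def)
  finally show ?thesis .
qed

lemma foldr_supp: "foldr nS es G q \<noteq> zv \<Longrightarrow> (\<forall>i<length es. q i = es ! i) \<and> G (sh (length es) q) \<noteq> zv"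
proof (induction es arbitrary: q)
  case (Cons e es)
  have "nS e (foldr nS es G) q \<noteq> zv" using Cons.prems by simp
  then have h: "q 0 = e" "foldr nS es G (sh 1 q) \<noteq> zv"
    by (auto simp: nS_def split: if_splits)
  from Cons.IH[OF h(2)] have A: "\<forall>i<length es. sh 1 q i = es ! i" and B: "G (sh (length es) (sh 1 q)) \<noteq> zv"
    by blast+
  have "sh (length es) (sh 1 q) = sh (Suc (length es)) q" by (simp del: sh_app)
  with A B have "\<forall>i<length es. q (Suc i) = es ! i" "G (sh (Suc (length es)) q) \<noteq> zv"
    by auto
  then show ?case using h(1) by (auto simp del: sh_app simp: nth_Cons' less_Suc_eq_0_disj)
qed simp

lemma zs_fixed: assumes G: "G \<in> Vn" and fx: "zs G = G" and nofix: "\<And>l. l \<in> L \<Longrightarrow> X l = l \<Longrightarrow> l = zv"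
  shows "G = (\<lambda>q. zv)"
proof -
  have one: "G q \<noteq> zv \<Longrightarrow> (\<forall>i<d. q i = p0 i) \<and> G (sh d q) \<noteq> zv" for q
    using foldr_supp[of "map p0 [0..<d]" G q] fx by (simp add: zs_def)
  have "\<forall>q. G q \<noteq> zv \<longrightarrow> (\<forall>i < n * d. q i = p0 i)" for n
  proof (induction n)
    case (Suc n)
    show ?case
    proof (intro allI impI)
      fix q i assume q: "G q \<noteq> zv" and i: "i < Suc n * d"
      show "q i = p0 i"
      proof (cases "i < d")
        case True then show ?thesis using one q by auto
      next
        case False
        define i' where "i' = i - d"
        have i': "i = i' + d" "i' < n * d" using i False unfolding i'_def by auto
        have "G (sh d q) \<noteq> zv" using one[OF q] by blast
        then have "\<forall>i<n*d. sh d q i = p0 i" using Suc.IH by blast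
        then have "sh d q i' = p0 i'" using i'(2) by blast
        also have "p0 i' = p0 (i' + d)" using fun_cong[OF d_per, of i'] by simp
        finally show ?thesis using i' by simp
      qed
    qed
  qed simp
  then have supp0: "G q \<noteq> zv \<Longrightarrow> q = p0" for q
  proof -
    assume q: "G q \<noteq> zv"
    have "q i = p0 i" for i
    proof -
      have "Suc i * 1 \<le> Suc i * d" using d_pos by (intro mult_le_mono2) auto
      then have "i < Suc i * d" by simp
      then show ?thesis using \<open>\<And>n. \<forall>q. G q \<noteq> zv \<longrightarrow> (\<forall>i<n * d. q i = p0 i)\<close> q by blast
    qed
    then show "q = p0" by auto
  qed
  have Gd: "G = delta p0 (G p0)"
  proof (rule ext)
    fix q show "G q = delta p0 (G p0) q"
      using supp0[of q] by (cases "q = p0") (auto simp: delta_def)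
  qed
  have "delta p0 (X (G p0)) = zs (delta p0 (G p0))" using zs_delta[OF VnD(3)[OF G]] by simp
  also have "\<dots> = zs G" by (simp only: Gd[symmetric])
  also have "\<dots> = G" by (rule fx)
  also have "\<dots> = delta p0 (G p0)" by (rule Gd)
  finally have "delta p0 (X (G p0)) = delta p0 (G p0)" .
  then have "X (G p0) = G p0" by (drule_tac fun_cong[where x=p0]) (simp add: delta_def)
  then have "G p0 = zv" using nofix VnD(3)[OF G] by blast
  then have "delta p0 (G p0) = (\<lambda>q. zv)" by (simp add: delta_def fun_eq_iff)
  with Gd show ?thesis by (simp only:)
qed

end

context chen
begin

lemma delta_add: "delta q (\<lambda>i. (x::nat\<Rightarrow>'k) i + y i) = (\<lambda>q' j. delta q x q' j + delta q y q' j)"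
  by (auto simp: delta_def fun_eq_iff)
lemma delta_smult: "delta q (\<lambda>i. c * (x::nat\<Rightarrow>'k) i) = (\<lambda>q' j. c * delta q x q' j)"
  by (auto simp: delta_def fun_eq_iff)

lemma t1: assumes U: "Uinv U" and x: "x \<in> L" "delta p0 x \<in> U" shows "delta p0 (X x) \<in> U"
proof -
  have "zs (delta p0 x) \<in> U" by (rule zs_U[OF U x(2)])
  then show ?thesis by (simp only: zs_delta[OF x(1)])
qed

lemma irr_native:
  assumes U: "Uinv U" and F: "F \<in> U" "F \<noteq> (\<lambda>q. zv)"
  shows "Vn \<subseteq> U"
proof -
  have UV: "U \<subseteq> Vn" and U0: "(\<lambda>q. zv) \<in> U"
    and Uadd: "\<And>F G. F \<in> U \<Longrightarrow> G \<in> U \<Longrightarrow> (\<lambda>q j. F q j + G q j) \<in> U"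
    and Usm: "\<And>c F. F \<in> U \<Longrightarrow> (\<lambda>q j. c * F q j) \<in> U"
    and US: "\<And>e F. e \<in> E1 \<Longrightarrow> F \<in> U \<Longrightarrow> nS e F \<in> U"
    and USt: "\<And>e F. e \<in> E1 \<Longrightarrow> F \<in> U \<Longrightarrow> nSt e F \<in> U"
    using U unfolding Uinv_def by auto
  obtain G q where G: "G \<in> U" "G q \<noteq> zv" "supp G = {q}" using isolate[OF U F] by blast
  have GV: "G \<in> Vn" using G UV by auto
  have q: "q \<in> T" using VnD(2)[OF GV] G by auto
  have Gd: "G = delta q (G q)"
  proof
    fix q' show "G q' = delta q (G q) q'" using G(3) by (cases "q' = q") (auto simp: delta_def supp_def)
  qed
  define Pr where "Pr q \<longleftrightarrow> (\<exists>l\<in>L. l \<noteq> zv \<and> delta q l \<in> U)" for q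
  have Prq: "Pr q" unfolding Pr_def using G Gd VnD(3)[OF GV] by metis
  have "Pr p0"
  proof (rule conn[where Pr=Pr, OF _ _ q Prq p0_T])
    fix q assume q: "q \<in> T" "Pr q"
    then obtain l where l: "l \<in> L" "l \<noteq> zv" "delta q l \<in> U" unfolding Pr_def by blast
    have "nSt (q 0) (delta q l) \<in> U" using USt T_path[OF q(1), of 0] l by blast
    then have "delta (sh 1 q) (twi q l) \<in> U" using delta_St[OF q(1)] by simp
    moreover have "twi q l \<in> L" "twi q l \<noteq> zv" using l twi_L twi_nz by blast+
    ultimately show "Pr (sh 1 q)" unfolding Pr_def by blast
  next
    fix q e assume q: "q \<in> T" "e \<in> E1" "r e = s (q 0)" "Pr q"
    then obtain l where l: "l \<in> L" "l \<noteq> zv" "delta q l \<in> U" unfolding Pr_def by blast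
    have "nS e (delta q l) \<in> U" using US q l by blast
    then have "delta (cns e q) (tw (cns e q) l) \<in> U" using delta_S[OF q(1-3)] by simp
    moreover have "tw (cns e q) l \<in> L" "tw (cns e q) l \<noteq> zv" using l tw_L tw_nz by blast+
    ultimately show "Pr (cns e q)" unfolding Pr_def by blast
  qed
  then obtain l0 where l0: "l0 \<in> L" "l0 \<noteq> zv" "delta p0 l0 \<in> U" unfolding Pr_def by blast
  define UL where "UL = {l \<in> L. delta p0 l \<in> U}"
  have "L \<subseteq> UL"
  proof (rule L_irr)
    show "UL \<subseteq> L" unfolding UL_def by auto
    show "\<forall>x\<in>UL. \<forall>y\<in>UL. (\<lambda>i. x i + y i) \<in> UL"
      unfolding UL_def using L_add Uadd by (auto simp: delta_add)
    show "\<forall>c. \<forall>x\<in>UL. (\<lambda>i. c * x i) \<in> UL"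
      unfolding UL_def using L_smult Usm by (auto simp: delta_smult)
    show "\<forall>x\<in>UL. X x \<in> UL"
      unfolding UL_def using X_L t1[OF U] by blast
    show "\<exists>x\<in>UL. x \<noteq> zv" using l0 unfolding UL_def by blast
  qed
  define good where "good q \<longleftrightarrow> (\<forall>l\<in>L. delta q l \<in> U)" for q
  have goodp0: "good p0" using \<open>L \<subseteq> UL\<close> unfolding good_def UL_def by auto
  have allgood: "good q'" if q': "q' \<in> T" for q'
  proof (rule conn[where Pr=good, OF _ _ p0_T goodp0 q'])
    fix q assume q: "q \<in> T" "good q"
    show "good (sh 1 q)" unfolding good_def
    proof
      fix l assume l: "l \<in> L"
      have "nSt (q 0) (delta q (tw q l)) \<in> U" using USt T_path[OF q(1), of 0] q(2) tw_L[OF l]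
        unfolding good_def by blast
      then show "delta (sh 1 q) l \<in> U" using delta_St[OF q(1)] l by simp
    qed
  next
    fix q e assume q: "q \<in> T" "e \<in> E1" "r e = s (q 0)" "good q"
    show "good (cns e q)" unfolding good_def
    proof
      fix l assume l: "l \<in> L"
      have "nS e (delta q (twi (cns e q) l)) \<in> U" using US q twi_L[OF l]
        unfolding good_def by blast
      then show "delta (cns e q) l \<in> U" using delta_S[OF q(1-3)] l by simp
    qed
  qed
  show "Vn \<subseteq> U"
  proof
    fix H assume "H \<in> Vn"
    then show "H \<in> U"
    proof (induction "card (supp H)" arbitrary: H rule: less_induct)
      case less
      show ?case
      proof (cases "supp H = {}")
        case True
        then have "H = (\<lambda>q. zv)" by (auto simp: supp_def)
        then show ?thesis using U0 by simp
      next
        case False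
        then obtain q where qs: "q \<in> supp H" by blast
        define H' where "H' = H(q := zv)"
        have sH': "supp H' = supp H - {q}" by (auto simp: H'_def supp_def)
        have "finite (supp H')" using sH' VnD(1)[OF less.prems] by simp
        moreover have "supp H' \<subseteq> T" using sH' VnD(2)[OF less.prems] by (auto simp: supp_def)
        moreover have "\<forall>q'. H' q' \<in> L" using VnD(3)[OF less.prems] zv_L by (simp add: H'_def)
        ultimately have "H' \<in> Vn" unfolding Vn_def by blast
        moreover have "card (supp H') < card (supp H)"
          unfolding sH' by (rule card_Diff1_less[OF VnD(1)[OF less.prems] qs])
        ultimately have "H' \<in> U" using less.hyps by blast
        moreover have "delta q (H q) \<in> U"
        proof -
          have "H q \<noteq> zv" using qs by (simp add: supp_def)
          then have "q \<in> T" by (rule VnD(2)[OF less.prems])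
          then have "good q" by (rule allgood)
          then show ?thesis using VnD(3)[OF less.prems] unfolding good_def by blast
        qed
        ultimately have "(\<lambda>q' j. H' q' j + delta q (H q) q' j) \<in> U" by (rule Uadd)
        moreover have "(\<lambda>q' j. H' q' j + delta q (H q) q' j) = H"
        proof (rule ext)
          fix q' show "(\<lambda>q' j. H' q' j + delta q (H q) q' j) q' = H q'"
            by (cases "q' = q") (simp_all add: H'_def delta_def)
        qed
        ultimately show ?thesis by simp
      qed
    qed
  qed
qed

end

context chen
begin

definition CC where "CC = enc ` (T \<times> UNIV)"
definition dec where "dec = inv_into (T \<times> UNIV) enc"
definition Phi :: "((nat \<Rightarrow> 'b) \<Rightarrow> nat \<Rightarrow> 'k) \<Rightarrow> ('a, 'b, 'k) space" where
  "Phi F = (\<lambda>w. if w \<in> CC then F (fst (dec w)) (snd (dec w)) else 0)"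
definition Psi :: "('a, 'b, 'k) space \<Rightarrow> (nat \<Rightarrow> 'b) \<Rightarrow> nat \<Rightarrow> 'k" where
  "Psi x = (\<lambda>q j. if q \<in> T then x (enc (q, j)) else 0)"
definition VW where "VW = Phi ` Vn"
definition PW where "PW v x = Phi (nP v (Psi x))"
definition SW where "SW e x = Phi (nS e (Psi x))"
definition StW where "StW e x = Phi (nSt e (Psi x))"

definition tsup where "tsup F \<longleftrightarrow> (\<forall>q. q \<notin> T \<longrightarrow> F q = zv)"

lemma Psi_Phi: assumes "tsup F" shows "Psi (Phi F) = F"
proof (rule ext, rule ext)
  fix q j
  show "Psi (Phi F) q j = F q j"
  proof (cases "q \<in> T")
    case True
    then have "enc (q, j) \<in> CC" "dec (enc (q, j)) = (q, j)"
      unfolding CC_def dec_def using inv_into_f_f[OF enc_inj] by auto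
    then show ?thesis using True by (simp add: Psi_def Phi_def)
  next
    case False then show ?thesis using assms by (simp add: Psi_def tsup_def)
  qed
qed

lemma tsup_Vn: "F \<in> Vn \<Longrightarrow> tsup F" using VnD(2) unfolding tsup_def by blast
lemma tsup_nP: "tsup (nP v F)" by (simp add: tsup_def nP_def)
lemma tsup_nS: "tsup (nS v F)" by (simp add: tsup_def nS_def)
lemma tsup_nSt: "tsup (nSt v F)" by (simp add: tsup_def nSt_def)
lemma tsup_zero: "tsup (\<lambda>q. zv)" by (simp add: tsup_def)

lemma Phi_zero: "Phi (\<lambda>q. zv) = (\<lambda>i. 0)" by (simp add: Phi_def fun_eq_iff)
lemma Phi_add: "Phi (\<lambda>q j. F q j + G q j) = (\<lambda>i. Phi F i + Phi G i)" by (simp add: Phi_def fun_eq_iff)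
lemma Phi_smult: "Phi (\<lambda>q j. c * F q j) = (\<lambda>i. c * Phi F i)" by (simp add: Phi_def fun_eq_iff)
lemma Psi_add: "Psi (\<lambda>i. x i + y i) = (\<lambda>q j. Psi x q j + Psi y q j)" by (simp add: Psi_def fun_eq_iff)
lemma Psi_smult: "Psi (\<lambda>i. c * x i) = (\<lambda>q j. c * Psi x q j)" by (simp add: Psi_def fun_eq_iff)
lemma Phi_sum: "(\<lambda>i. \<Sum>e\<in>A. Phi (G e) i) = Phi (\<lambda>q j. \<Sum>e\<in>A. G e q j)"
  by (simp add: Phi_def fun_eq_iff)

lemma Phi_eq0: assumes "tsup G" "Phi G = (\<lambda>i. 0)" shows "G = (\<lambda>q. zv)"
proof -
  have "G = Psi (Phi G)" using Psi_Phi[OF assms(1)] by simp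
  also have "\<dots> = Psi (\<lambda>i. 0)" using assms(2) by simp
  also have "\<dots> = (\<lambda>q. zv)" by (simp add: Psi_def fun_eq_iff)
  finally show ?thesis .
qed

lemma Phi_inj: assumes "tsup F" "tsup G" "Phi F = Phi G" shows "F = G"
  using Psi_Phi[OF assms(1)] Psi_Phi[OF assms(2)] assms(3) by metis

lemma PW_Phi: "F \<in> Vn \<Longrightarrow> PW v (Phi F) = Phi (nP v F)" by (simp add: PW_def Psi_Phi tsup_Vn)
lemma SW_Phi: "F \<in> Vn \<Longrightarrow> SW v (Phi F) = Phi (nS v F)" by (simp add: SW_def Psi_Phi tsup_Vn)
lemma StW_Phi: "F \<in> Vn \<Longrightarrow> StW v (Phi F) = Phi (nSt v F)" by (simp add: StW_def Psi_Phi tsup_Vn)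

lemma VW_E: "x \<in> VW \<Longrightarrow> (\<And>F. F \<in> Vn \<Longrightarrow> x = Phi F \<Longrightarrow> thesis) \<Longrightarrow> thesis"
  unfolding VW_def by blast

lemma VW_I: "F \<in> Vn \<Longrightarrow> Phi F \<in> VW" unfolding VW_def by blast

lemma VW_sub: "subspace VW"
  unfolding subspace_def
proof (intro conjI ballI allI)
  show "(\<lambda>i. 0) \<in> VW" using VW_I[OF Vn_zero] Phi_zero by simp
  fix x y assume "x \<in> VW" "y \<in> VW"
  then obtain F G where "F \<in> Vn" "G \<in> Vn" "x = Phi F" "y = Phi G" by (metis VW_E)
  then show "(\<lambda>i. x i + y i) \<in> VW" using VW_I[OF Vn_add] Phi_add by metis
next
  fix c x assume "x \<in> VW"
  then obtain F where "F \<in> Vn" "x = Phi F" by (metis VW_E)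
  then show "(\<lambda>i. c * x i) \<in> VW" using VW_I[OF Vn_smult] Phi_smult by metis
qed

lemma Psi_VW: "F \<in> Vn \<Longrightarrow> Psi (Phi F) = F" by (simp add: Psi_Phi tsup_Vn)

lemma lin_generic:
  assumes add: "\<And>F G. F \<in> Vn \<Longrightarrow> G \<in> Vn \<Longrightarrow> op (\<lambda>q j. F q j + G q j) = (\<lambda>q j. op F q j + op G q j)"
    and sm: "\<And>c F. F \<in> Vn \<Longrightarrow> op (\<lambda>q j. c * F q j) = (\<lambda>q j. c * op F q j)"
  shows "lin_on VW (\<lambda>x. Phi (op (Psi x)))"
  unfolding lin_on_def
proof (intro conjI ballI allI)
  fix x y assume "x \<in> VW" "y \<in> VW"
  then obtain F G where FG: "F \<in> Vn" "G \<in> Vn" "x = Phi F" "y = Phi G" by (metis VW_E)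
  show "Phi (op (Psi (\<lambda>i. x i + y i))) = (\<lambda>j. Phi (op (Psi x)) j + Phi (op (Psi y)) j)"
    unfolding Psi_add using FG by (simp add: Psi_VW add Phi_add)
next
  fix c x assume "x \<in> VW"
  then obtain F where F: "F \<in> Vn" "x = Phi F" by (metis VW_E)
  show "Phi (op (Psi (\<lambda>i. c * x i))) = (\<lambda>j. c * Phi (op (Psi x)) j)"
    unfolding Psi_smult using F by (simp add: Psi_VW sm Phi_smult)
qed

lemma rep: "LPA_rep E0 E1 r s VW PW SW StW"
  unfolding LPA_rep_def
proof (intro conjI ballI impI)
  show "subspace VW" by (rule VW_sub)
  fix v assume v: "v \<in> E0"
  show "lin_on VW (PW v)" unfolding PW_def[abs_def]
    by (rule lin_generic) (simp_all add: nP_add nP_smult)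
  show "PW v ` VW \<subseteq> VW" by (auto elim!: VW_E simp: PW_Phi intro!: VW_I nP_Vn)
next
  fix e assume e: "e \<in> E1"
  show "lin_on VW (SW e)" unfolding SW_def[abs_def]
    by (rule lin_generic) (simp_all add: nS_add nS_smult)
  show "lin_on VW (StW e)" unfolding StW_def[abs_def]
    by (rule lin_generic) (simp_all add: nSt_add nSt_smult)
  show "SW e ` VW \<subseteq> VW" by (auto elim!: VW_E simp: SW_Phi intro!: VW_I nS_Vn)
  show "StW e ` VW \<subseteq> VW" by (auto elim!: VW_E simp: StW_Phi intro!: VW_I nSt_Vn)
  show "eq_on VW (PW (s e) \<circ> SW e) (SW e)" unfolding eq_on_def
    by (auto elim!: VW_E simp: SW_Phi PW_Phi nS_Vn rel_PS)
  show "eq_on VW (SW e \<circ> PW (r e)) (SW e)" unfolding eq_on_def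
    by (auto elim!: VW_E simp: SW_Phi PW_Phi nP_Vn rel_SP e)
  show "eq_on VW (PW (r e) \<circ> StW e) (StW e)" unfolding eq_on_def
    by (auto elim!: VW_E simp: StW_Phi PW_Phi nSt_Vn rel_PSt)
  show "eq_on VW (StW e \<circ> PW (s e)) (StW e)" unfolding eq_on_def
    by (auto elim!: VW_E simp: StW_Phi PW_Phi nP_Vn rel_StP)
next
  fix e f assume e: "e \<in> E1" and f: "f \<in> E1"
  show "eq_on VW (StW e \<circ> SW f) (if e = f then PW (r e) else (\<lambda>x i. 0))" unfolding eq_on_def
    by (auto elim!: VW_E simp: StW_Phi SW_Phi PW_Phi nS_Vn rel_StS e f Phi_zero)
next
  fix v w assume "v \<in> E0" "w \<in> E0"
  show "eq_on VW (PW v \<circ> PW w) (if v = w then PW v else (\<lambda>x i. 0))" unfolding eq_on_def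
    by (auto elim!: VW_E simp: PW_Phi nP_Vn rel_PP Phi_zero)
next
  fix v assume "v \<in> E0" "regular_vertex E1 s v"
  then have fin: "finite {e\<in>E1. s e = v}" by (simp add: regular_vertex_def)
  show "eq_on VW (PW v) (\<lambda>x i. \<Sum>e\<in>{e\<in>E1. s e = v}. SW e (StW e x) i)" unfolding eq_on_def
  proof
    fix x assume "x \<in> VW"
    then obtain F where F: "F \<in> Vn" "x = Phi F" by (metis VW_E)
    have "(\<lambda>i. \<Sum>e\<in>{e\<in>E1. s e = v}. SW e (StW e x) i) = (\<lambda>i. \<Sum>e\<in>{e\<in>E1. s e = v}. Phi (nS e (nSt e F)) i)"
      using F by (simp add: StW_Phi SW_Phi nSt_Vn)
    also have "\<dots> = Phi (\<lambda>q j. \<Sum>e\<in>{e\<in>E1. s e = v}. nS e (nSt e F) q j)" by (rule Phi_sum)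
    also have "\<dots> = Phi (nP v F)" using rel_CK[OF F(1) fin] by simp
    also have "\<dots> = PW v x" using F by (simp add: PW_Phi)
    finally show "PW v x = (\<lambda>i. \<Sum>e\<in>{e\<in>E1. s e = v}. SW e (StW e x) i)" by simp
  qed
qed

end

context chen
begin

lemma delta_Vn: assumes "q \<in> T" "l \<in> L" shows "delta q l \<in> Vn"
proof -
  have "supp (delta q l) \<subseteq> {q}" by (auto simp: supp_def delta_def)
  then have "finite (supp (delta q l))" by (rule finite_subset) simp
  moreover have "supp (delta q l) \<subseteq> T" using assms \<open>supp (delta q l) \<subseteq> {q}\<close> by blast
  moreover have "\<forall>q'. delta q l q' \<in> L" using assms zv_L by (simp add: delta_def)
  ultimately show ?thesis by (simp add: Vn_def)
qed

lemma irr: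
  assumes Lnz: "l0 \<in> L" "l0 \<noteq> zv"
  shows "irreducible_rep E0 E1 r s VW PW SW StW"
  unfolding irreducible_rep_def
proof (intro conjI)
  show "LPA_rep E0 E1 r s VW PW SW StW" by (rule rep)
  define x0 where "x0 = Phi (delta p0 l0)"
  have D: "delta p0 l0 \<in> Vn" by (rule delta_Vn[OF p0_T Lnz(1)])
  have x0V: "x0 \<in> VW" unfolding x0_def by (rule VW_I[OF D])
  have dnz: "delta p0 l0 \<noteq> (\<lambda>q. zv)"
  proof
    assume "delta p0 l0 = (\<lambda>q. zv)"
    then have "delta p0 l0 p0 = zv" by simp
    then show False using Lnz by (simp add: delta_def)
  qed
  have x0nz: "x0 \<noteq> (\<lambda>i. 0)" using Phi_eq0[OF tsup_Vn[OF D]] dnz unfolding x0_def by blast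
  show "VW \<noteq> {\<lambda>i. 0}" using x0V x0nz by blast
  have v: "s (p0 0) \<in> E0" using gr p0_path unfolding graph_def by auto
  have "nP (s (p0 0)) (delta p0 l0) = delta p0 l0"
    using p0_T by (auto simp: nP_def delta_def)
  then have "PW (s (p0 0)) x0 = x0" unfolding x0_def by (simp add: PW_Phi D)
  then show "\<exists>x\<in>VW. (\<exists>v\<in>E0. PW v x \<noteq> (\<lambda>i. 0)) \<or> (\<exists>e\<in>E1. SW e x \<noteq> (\<lambda>i. 0) \<or> StW e x \<noteq> (\<lambda>i. 0))"
    using x0V x0nz v by metis
  show "\<forall>U. subspace U \<and> U \<subseteq> VW \<and> invariant E0 E1 U PW SW StW \<longrightarrow> U = {\<lambda>i. 0} \<or> U = VW"
  proof (intro allI impI)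
    fix U assume h: "subspace U \<and> U \<subseteq> VW \<and> invariant E0 E1 U PW SW StW"
    define Uq where "Uq = {G \<in> Vn. Phi G \<in> U}"
    have sub: "(\<lambda>i. 0) \<in> U" "\<And>x y. x \<in> U \<Longrightarrow> y \<in> U \<Longrightarrow> (\<lambda>i. x i + y i) \<in> U"
      "\<And>c x. x \<in> U \<Longrightarrow> (\<lambda>i. c * x i) \<in> U" using h unfolding subspace_def by auto
    have inv: "\<And>e x. e \<in> E1 \<Longrightarrow> x \<in> U \<Longrightarrow> SW e x \<in> U" "\<And>e x. e \<in> E1 \<Longrightarrow> x \<in> U \<Longrightarrow> StW e x \<in> U"
      using h unfolding invariant_def by (auto simp: image_subset_iff)
    have Uinv: "Uinv Uq" unfolding Uinv_def
    proof (intro conjI ballI allI)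
      show "Uq \<subseteq> Vn" unfolding Uq_def by auto
      show "(\<lambda>q. zv) \<in> Uq" unfolding Uq_def using Vn_zero sub(1) Phi_zero by simp
      fix F G assume "F \<in> Uq" "G \<in> Uq"
      then show "(\<lambda>q j. F q j + G q j) \<in> Uq" unfolding Uq_def using Vn_add sub(2) Phi_add by simp
    next
      fix c F assume "F \<in> Uq"
      then show "(\<lambda>q j. c * F q j) \<in> Uq" unfolding Uq_def using Vn_smult sub(3) Phi_smult by simp
    next
      fix e F assume "e \<in> E1" "F \<in> Uq"
      then show "nS e F \<in> Uq" "nSt e F \<in> Uq" unfolding Uq_def
        using nS_Vn nSt_Vn inv SW_Phi StW_Phi by (auto simp flip: SW_Phi StW_Phi)
    qed
    show "U = {\<lambda>i. 0} \<or> U = VW"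
    proof (cases "\<exists>x\<in>U. x \<noteq> (\<lambda>i. 0)")
      case False
      then show ?thesis using sub(1) by blast
    next
      case True
      then obtain x where x: "x \<in> U" "x \<noteq> (\<lambda>i. 0)" by blast
      then have "x \<in> VW" using h by blast
      then obtain F where F: "F \<in> Vn" "x = Phi F" by (metis VW_E)
      have "F \<noteq> (\<lambda>q. zv)" using F x Phi_zero by metis
      moreover have "F \<in> Uq" using F x unfolding Uq_def by simp
      ultimately have "Vn \<subseteq> Uq" using irr_native[OF Uinv] by blast
      then have "VW \<subseteq> U" unfolding VW_def Uq_def by blast
      then show ?thesis using h by blast
    qed
  qed
qed

definition zsW where "zsW x = foldr SW (map p0 [0..<d]) x"

lemma foldr_Phi: "F \<in> Vn \<Longrightarrow> foldr SW es (Phi F) = Phi (foldr nS es F) \<and> foldr nS es F \<in> Vn"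
  by (induct es) (auto simp: SW_Phi nS_Vn)

lemma zsW_Phi: "F \<in> Vn \<Longrightarrow> zsW (Phi F) = Phi (zs F)"
  using foldr_Phi unfolding zsW_def zs_def by blast

lemma fixed_vec: assumes "l \<in> L" "X l = l"
  shows "Phi (delta p0 l) \<in> VW \<and> zsW (Phi (delta p0 l)) = Phi (delta p0 l)"
  using assms delta_Vn[OF p0_T assms(1)] zsW_Phi zs_delta VW_I by metis

lemma no_fixed: assumes nofix: "\<And>l. l \<in> L \<Longrightarrow> X l = l \<Longrightarrow> l = zv"
  and y: "y \<in> VW" "zsW y = y" shows "y = (\<lambda>i. 0)"
proof -
  obtain G where G: "G \<in> Vn" "y = Phi G" using y(1) by (metis VW_E)
  have "Phi (zs G) = Phi G" using y(2) G zsW_Phi by metis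
  then have "zs G = G" using Phi_inj[OF tsup_Vn tsup_Vn] G(1) foldr_Phi[OF G(1)] unfolding zs_def by blast
  then have "G = (\<lambda>q. zv)" using zs_fixed[OF G(1) _ nofix] by blast
  then show ?thesis using G Phi_zero by simp
qed

end

lemma transport:
  assumes comm: "\<forall>e\<in>E1. \<forall>x\<in>V1. T (S1 e x) = S2 e (T x)"
    and cl: "\<forall>e\<in>E1. S1 e ` V1 \<subseteq> V1"
  shows "set es \<subseteq> E1 \<Longrightarrow> x \<in> V1 \<Longrightarrow> T (foldr S1 es x) = foldr S2 es (T x) \<and> foldr S1 es x \<in> V1"
proof (induction es)
  case (Cons e es)
  then have IH: "T (foldr S1 es x) = foldr S2 es (T x)" "foldr S1 es x \<in> V1" and e: "e \<in> E1" by auto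
  then show ?case using comm cl by (auto simp: image_subset_iff)
qed simp

lemma L1_chen:
  fixes p0 :: "nat \<Rightarrow> 'b"
  assumes "graph E0 E1 r s" "\<And>i. p0 i \<in> E1 \<and> r (p0 i) = s (p0 (Suc i))"
    "0 < d" "sh d p0 = p0" "\<And>j. 0 < j \<Longrightarrow> j < d \<Longrightarrow> sh j p0 \<noteq> p0"
    and a: "a \<noteq> 0"
  shows "chen E0 E1 r s p0 d {l::nat\<Rightarrow>'k::field. \<forall>j. j \<noteq> 0 \<longrightarrow> l j = 0} (\<lambda>l i. a * l i) (\<lambda>l i. inverse a * l i)"
proof (unfold_locales)
  let ?L = "{l::nat\<Rightarrow>'k::field. \<forall>j. j \<noteq> 0 \<longrightarrow> l j = 0}"
  show "graph E0 E1 r s" "\<And>i. p0 i \<in> E1 \<and> r (p0 i) = s (p0 (Suc i))"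
    "0 < d" "sh d p0 = p0" "\<And>j. 0 < j \<Longrightarrow> j < d \<Longrightarrow> sh j p0 \<noteq> p0" by fact+
  show "subspace ?L" by (simp add: subspace_def)
  show "lin_on ?L (\<lambda>l i. a * l i)" "lin_on ?L (\<lambda>l i. inverse a * l i)"
    by (auto simp: lin_on_def fun_eq_iff algebra_simps)
  show "\<And>l. l \<in> ?L \<Longrightarrow> (\<lambda>i. a * l i) \<in> ?L" "\<And>l. l \<in> ?L \<Longrightarrow> (\<lambda>i. inverse a * l i) \<in> ?L" by auto
  show "\<And>l. l \<in> ?L \<Longrightarrow> (\<lambda>i. a * (inverse a * l i)) = l" "\<And>l. l \<in> ?L \<Longrightarrow> (\<lambda>i. inverse a * (a * l i)) = l"
    using a by (auto simp: fun_eq_iff)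
  show "?L \<subseteq> U" if U: "U \<subseteq> ?L" "\<forall>x\<in>U. \<forall>y\<in>U. (\<lambda>i. x i + y i) \<in> U" "\<forall>c. \<forall>x\<in>U. (\<lambda>i. c * x i) \<in> U"
     "\<forall>x\<in>U. (\<lambda>i. a * x i) \<in> U" "\<exists>x\<in>U. x \<noteq> zv" for U
  proof
    fix l assume l: "l \<in> ?L"
    obtain x where x: "x \<in> U" "x \<noteq> zv" using U by blast
    have "x 0 \<noteq> 0"
    proof
      assume x0: "x 0 = 0"
      have "x i = 0" for i using x0 x(1) U(1) by (cases "i = 0") auto
      then have "x = zv" by (simp add: fun_eq_iff)
      then show False using x by simp
    qed
    have "(\<lambda>i. (l 0 / x 0) * x i) = l"
    proof
      fix i show "l 0 / x 0 * x i = l i" using \<open>x 0 \<noteq> 0\<close> l x U by (cases "i = 0") auto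
    qed
    then show "l \<in> U" using U(3) x(1) by metis
  qed
qed

definition X2 :: "(nat \<Rightarrow> 'k::field) \<Rightarrow> nat \<Rightarrow> 'k" where
  "X2 l = (\<lambda>j. if j = 0 then l 1 else if j = 1 then l 0 + l 1 else 0)"
definition Xi2 :: "(nat \<Rightarrow> 'k::field) \<Rightarrow> nat \<Rightarrow> 'k" where
  "Xi2 l = (\<lambda>j. if j = 0 then l 0 + l 1 else if j = 1 then l 0 else 0)"
definition L2 :: "(nat \<Rightarrow> 'k::field) set" where
  "L2 = {l. \<forall>j. 2 \<le> j \<longrightarrow> l j = 0}"

lemma char2: assumes b: "\<forall>x::'k::field. x = 0 \<or> x = 1" shows "(x::'k) + x = 0"
proof -
  have "(1::'k) + 1 = 0"
  proof -
    have "(1::'k) + 1 = 0 \<or> (1::'k) + 1 = 1" using b by blast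
    moreover have "(1::'k) + 1 \<noteq> 1"
    proof
      assume "(1::'k) + 1 = 1"
      then have "(1::'k) + 1 = 1 + 0" by simp
      then have "(1::'k) = 0" by (simp only: add_left_cancel)
      then show False by simp
    qed
    ultimately show ?thesis by blast
  qed
  then have "x * (1 + 1) = 0" by simp
  then show ?thesis by (simp add: algebra_simps)
qed

lemma L2_chen:
  fixes p0 :: "nat \<Rightarrow> 'b"
  assumes "graph E0 E1 r s" "\<And>i. p0 i \<in> E1 \<and> r (p0 i) = s (p0 (Suc i))"
    "0 < d" "sh d p0 = p0" "\<And>j. 0 < j \<Longrightarrow> j < d \<Longrightarrow> sh j p0 \<noteq> p0"
    and b: "\<forall>x::'k::field. x = 0 \<or> x = 1"
  shows "chen E0 E1 r s p0 d (L2::(nat \<Rightarrow> 'k) set) X2 Xi2"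
proof (unfold_locales)
  show "graph E0 E1 r s" "\<And>i. p0 i \<in> E1 \<and> r (p0 i) = s (p0 (Suc i))"
    "0 < d" "sh d p0 = p0" "\<And>j. 0 < j \<Longrightarrow> j < d \<Longrightarrow> sh j p0 \<noteq> p0" by fact+
  have c2: "\<And>x::'k. x + x = 0" using char2[OF b] by blast
  have c2': "\<And>x y::'k. x + y + x = y" "\<And>x y::'k. y + x + x = y" "\<And>x y::'k. x + (x + y) = y"
    using c2 by (metis add.commute add.left_neutral add.assoc)+
  show "subspace (L2::(nat \<Rightarrow> 'k) set)" by (simp add: subspace_def L2_def)
  show "lin_on L2 (X2::(nat \<Rightarrow> 'k) \<Rightarrow> _)" "lin_on L2 (Xi2::(nat \<Rightarrow> 'k) \<Rightarrow> _)"
    by (auto simp: lin_on_def fun_eq_iff algebra_simps X2_def Xi2_def)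
  show "\<And>l::nat \<Rightarrow> 'k. l \<in> L2 \<Longrightarrow> X2 l \<in> L2" "\<And>l::nat \<Rightarrow> 'k. l \<in> L2 \<Longrightarrow> Xi2 l \<in> L2"
    by (auto simp: L2_def X2_def Xi2_def)
  show "\<And>l::nat \<Rightarrow> 'k. l \<in> L2 \<Longrightarrow> X2 (Xi2 l) = l"
  proof -
    fix l :: "nat \<Rightarrow> 'k" assume l: "l \<in> L2"
    show "X2 (Xi2 l) = l"
    proof
      fix j show "X2 (Xi2 l) j = l j" using l c2' by (cases "j = 0"; cases "j = 1") (auto simp: X2_def Xi2_def L2_def)
    qed
  qed
  show "\<And>l::nat \<Rightarrow> 'k. l \<in> L2 \<Longrightarrow> Xi2 (X2 l) = l"
  proof -
    fix l :: "nat \<Rightarrow> 'k" assume l: "l \<in> L2"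
    show "Xi2 (X2 l) = l"
    proof
      fix j show "Xi2 (X2 l) j = l j" using l c2' by (cases "j = 0"; cases "j = 1") (auto simp: X2_def Xi2_def L2_def)
    qed
  qed
  show "L2 \<subseteq> U" if U: "U \<subseteq> L2" "\<forall>x\<in>U. \<forall>y\<in>U. (\<lambda>i. x i + y i) \<in> U" "\<forall>c. \<forall>x\<in>U. (\<lambda>i. c * x i) \<in> U"
     "\<forall>x\<in>U. X2 x \<in> U" "\<exists>x\<in>U. x \<noteq> zv" for U :: "(nat \<Rightarrow> 'k) set"
  proof -
    define e0 where "e0 = (\<lambda>j::nat. if j = 0 then (1::'k) else 0)"
    define e1 where "e1 = (\<lambda>j::nat. if j = 1 then (1::'k) else 0)"
    have Xe0: "X2 e0 = e1" by (auto simp: X2_def e0_def e1_def fun_eq_iff)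
    obtain x where x: "x \<in> U" "x \<noteq> zv" using U by blast
    have xL: "x j = 0" if "2 \<le> j" for j using x U that by (auto simp: L2_def)
    have "e0 \<in> U"
    proof (cases "x 0 = 0")
      case True
      then have x1: "x 1 = 1"
      proof -
        have "x 1 \<noteq> 0"
        proof
          assume "x 1 = 0"
          then have "x j = 0" for j using True xL by (cases "j = 0"; cases "j = 1") auto
          then show False using x by (simp add: fun_eq_iff)
        qed
        then show ?thesis using b by blast
      qed
      have "X2 (X2 x) = e0"
      proof
        fix j show "X2 (X2 x) j = e0 j" using True x1 c2 by (auto simp: X2_def e0_def)
      qed
      then show ?thesis using U(4) x(1) by metis
    next
      case False
      then have x0: "x 0 = 1" using b by blast
      show ?thesis
      proof (cases "x 1 = 0")
        case True
        have "x = e0"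
        proof
          fix j show "x j = e0 j" using True x0 xL by (cases "j = 0"; cases "j = 1") (auto simp: e0_def)
        qed
        then show ?thesis using x by simp
      next
        case False
        then have x1: "x 1 = 1" using b by blast
        have "X2 x = e0"
        proof
          fix j show "X2 x j = e0 j" using x0 x1 c2 by (auto simp: X2_def e0_def)
        qed
        then show ?thesis using U(4) x(1) by metis
      qed
    qed
    then have "e1 \<in> U" using U(4) Xe0 by metis
    show ?thesis
    proof
      fix l :: "nat \<Rightarrow> 'k" assume l: "l \<in> L2"
      have "(\<lambda>i. (\<lambda>i. l 0 * e0 i) i + (\<lambda>i. l 1 * e1 i) i) = l"
      proof
        fix j show "(\<lambda>i. l 0 * e0 i) j + (\<lambda>i. l 1 * e1 i) j = l j"
          using l by (cases "j = 0"; cases "j = 1") (auto simp: e0_def e1_def L2_def)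
      qed
      moreover have "(\<lambda>i. l 0 * e0 i) \<in> U" "(\<lambda>i. l 1 * e1 i) \<in> U"
        using U(3) \<open>e0 \<in> U\<close> \<open>e1 \<in> U\<close> by blast+
      ultimately show "l \<in> U" using U(2) by metis
    qed
  qed
qed

lemma X2_nofix: "l \<in> L2 \<Longrightarrow> X2 l = l \<Longrightarrow> l = (\<lambda>j. (0::'k::field))"
proof -
  assume l: "l \<in> L2" "X2 l = l"
  have a: "l 1 = l 0" using fun_cong[OF l(2), of 0] by (simp add: X2_def)
  have "l 0 + l 1 = l 1" using fun_cong[OF l(2), of 1] by (simp add: X2_def)
  then have z: "l 0 = 0" "l 1 = 0" using a by auto
  show "l = (\<lambda>j. 0)"
  proof
    fix j show "l j = 0" using z l(1) by (cases "j = 0"; cases "j = 1") (auto simp: L2_def)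
  qed
qed

lemma finish:
  fixes E0 :: "'a set" and E1 :: "'b set" and r s :: "'b \<Rightarrow> 'a"
    and L1 L2 :: "(nat \<Rightarrow> 'k::field) set"
  assumes c1: "chen E0 E1 r s p0 d L1 Y1 Yi1" and c2: "chen E0 E1 r s p0 d L2 Y2 Yi2"
   and l1: "l1 \<in> L1" "l1 \<noteq> zv" "Y1 l1 = l1"
   and l2: "l2 \<in> L2" "l2 \<noteq> zv"
   and nofix: "\<And>l. l \<in> L2 \<Longrightarrow> Y2 l = l \<Longrightarrow> l = zv"
   and hyp: "\<forall>(V1 :: ('a,'b,'k::field) space set) P1 S1 St1 V2 P2 S2 St2.
           irreducible_rep E0 E1 r s V1 P1 S1 St1 \<and> irreducible_rep E0 E1 r s V2 P2 S2 St2
           \<longrightarrow> alg_equiv E0 E1 V1 P1 S1 St1 V2 P2 S2 St2"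
  shows False
proof -
  interpret A: chen E0 E1 r s p0 d L1 Y1 Yi1 by (rule c1)
  interpret B: chen E0 E1 r s p0 d L2 Y2 Yi2 by (rule c2)
  have "alg_equiv E0 E1 A.VW A.PW A.SW A.StW B.VW B.PW B.SW B.StW"
    using hyp A.irr[OF l1(1,2)] B.irr[OF l2] by blast
  then obtain T where T: "bij_betw T A.VW B.VW" "lin_on A.VW T"
    "\<forall>e\<in>E1. \<forall>x\<in>A.VW. T (A.SW e x) = B.SW e (T x) \<and> T (A.StW e x) = B.StW e (T x)"
    unfolding alg_equiv_def by blast
  define x0 where "x0 = A.Phi (delta p0 l1)"
  have x0: "x0 \<in> A.VW" "A.zsW x0 = x0" using A.fixed_vec[OF l1(1) l1(3)] unfolding x0_def by auto
  have D: "delta p0 l1 \<in> A.Vn" by (rule A.delta_Vn[OF A.p0_T l1(1)])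
  have dnz: "delta p0 l1 \<noteq> (\<lambda>q. zv)"
  proof
    assume "delta p0 l1 = (\<lambda>q. zv)"
    then have "delta p0 l1 p0 = zv" by simp
    then show False using l1 by (simp add: delta_def)
  qed
  have x0nz: "x0 \<noteq> (\<lambda>i. 0)" using A.Phi_eq0[OF A.tsup_Vn[OF D]] dnz unfolding x0_def by blast
  have comm: "\<forall>e\<in>E1. \<forall>x\<in>A.VW. T (A.SW e x) = B.SW e (T x)" using T(3) by blast
  have cl: "\<forall>e\<in>E1. A.SW e ` A.VW \<subseteq> A.VW" using A.rep unfolding LPA_rep_def by blast
  have es: "set (map p0 [0..<d]) \<subseteq> E1" using A.p0_path by auto
  have "T (A.zsW x0) = B.zsW (T x0)"
    using transport[OF comm cl es x0(1)] unfolding A.zsW_def B.zsW_def by blast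
  then have fx: "B.zsW (T x0) = T x0" using x0(2) by simp
  have TV: "T x0 \<in> B.VW" using T(1) x0(1) by (rule bij_betw_apply)
  have "T x0 = (\<lambda>i. 0)" using B.no_fixed[OF nofix TV fx] by blast
  moreover have "(\<lambda>i. 0) \<in> A.VW" using A.VW_sub unfolding subspace_def by blast
  moreover have "T (\<lambda>i. 0) = (\<lambda>i. 0)"
  proof -
    have "T (\<lambda>i. 0 * x0 i) = (\<lambda>j. 0 * T x0 j)" using T(2) x0(1) unfolding lin_on_def by blast
    then show ?thesis by simp
  qed
  ultimately have "x0 = (\<lambda>i. 0)" using T(1) x0(1) unfolding bij_betw_def inj_on_def by metis
  then show False using x0nz by simp
qed

theorem lemma4p5:
  fixes E0 :: "'a set" and E1 :: "'b set" and r s :: "'b \<Rightarrow> 'a"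
  assumes "graph E0 E1 r s"
    and "\<forall>(V1 :: ('a,'b,'k::field) space set) P1 S1 St1 V2 P2 S2 St2.
           irreducible_rep E0 E1 r s V1 P1 S1 St1 \<and> irreducible_rep E0 E1 r s V2 P2 S2 St2
           \<longrightarrow> alg_equiv E0 E1 V1 P1 S1 St1 V2 P2 S2 St2"
  shows "\<not> has_cycle E1 r s"
proof
  assume "has_cycle E1 r s"
  then obtain c where c: "is_cycle E1 r s c" by (auto simp: has_cycle_def)
  define n where "n = length c"
  have n: "0 < n" using c by (simp add: is_cycle_def n_def)
  define p0 where "p0 = (\<lambda>i. c ! (i mod n))"
  have p0_path: "p0 i \<in> E1 \<and> r (p0 i) = s (p0 (Suc i))" for i
  proof
    have "i mod n < length c" using n by (simp add: n_def)
    then show "p0 i \<in> E1" using c by (auto simp: p0_def is_cycle_def)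
    show "r (p0 i) = s (p0 (Suc i))"
    proof (cases "Suc (i mod n) < n")
      case True
      then have "Suc i mod n = Suc (i mod n)" by (simp add: mod_Suc)
      then show ?thesis using c True by (simp add: p0_def is_cycle_def n_def)
    next
      case False
      then have im: "i mod n = n - 1" using mod_less_divisor[OF n, of i] by linarith
      then have "Suc i mod n = 0" using n False by (simp add: mod_Suc)
      moreover have "last c = c ! (n - 1)" using c by (simp add: is_cycle_def n_def last_conv_nth)
      moreover have "hd c = c ! 0" using c by (simp add: is_cycle_def hd_conv_nth)
      ultimately show ?thesis using c im by (simp add: p0_def is_cycle_def)
    qed
  qed
  have per: "sh n p0 = p0" by (simp add: sh_def p0_def fun_eq_iff)
  define d where "d = (LEAST d. 0 < d \<and> sh d p0 = p0)"
  have d: "0 < d \<and> sh d p0 = p0" unfolding d_def by (rule LeastI[of _ n]) (use n per in auto)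
  have dmin: "sh j p0 \<noteq> p0" if "0 < j" "j < d" for j
    using not_less_Least[of j "\<lambda>d. 0 < d \<and> sh d p0 = p0"] that unfolding d_def by blast
  define L1 where "L1 = {l::nat\<Rightarrow>'k. \<forall>j. j \<noteq> 0 \<longrightarrow> l j = 0}"
  define e0 where "e0 = (\<lambda>j::nat. if j = 0 then (1::'k) else 0)"
  have e0: "e0 \<in> L1" "e0 \<noteq> zv" by (auto simp: e0_def L1_def fun_eq_iff)
  have c1: "chen E0 E1 r s p0 d L1 (\<lambda>l i. 1 * l i) (\<lambda>l i. inverse 1 * l i)"
    unfolding L1_def by (rule L1_chen[of E0 E1 r s p0 d]) (use assms(1) p0_path d dmin in auto)
  show False
  proof (cases "\<exists>a::'k. a \<noteq> 0 \<and> a \<noteq> 1")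
    case True
    then obtain a :: 'k where a: "a \<noteq> 0" "a \<noteq> 1" by blast
    have c2: "chen E0 E1 r s p0 d L1 (\<lambda>l i. a * l i) (\<lambda>l i. inverse a * l i)"
      unfolding L1_def by (rule L1_chen[of E0 E1 r s p0 d]) (use assms(1) p0_path d dmin a in auto)
    have nofix: "l = zv" if "l \<in> L1" "(\<lambda>i. a * l i) = l" for l
    proof
      fix i
      have "a * l i = l i" using fun_cong[OF that(2), of i] by simp
      then have "(a - 1) * l i = 0" by (simp add: algebra_simps)
      then show "l i = 0" using a by simp
    qed
    show False by (rule finish[OF c1 c2 e0 _ e0 nofix assms(2)]) simp
  next
    case False
    then have b: "\<forall>x::'k. x = 0 \<or> x = 1" by blast
    have c2: "chen E0 E1 r s p0 d (L2::(nat \<Rightarrow> 'k) set) X2 Xi2"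
      by (rule L2_chen[of E0 E1 r s p0 d]) (use assms(1) p0_path d dmin b in auto)
    have e02: "e0 \<in> L2" by (simp add: e0_def L2_def)
    show False by (rule finish[OF c1 c2 e0 _ e02 e0(2) X2_nofix assms(2)]) simp_all
  qed
qed

end
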